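(* Let $K$ be an infinite field, $m\geq 1$, $n\geq 2$, and let $p(x_1,\ldots,x_m)\in K\langle x_1,\ldots,x_m\rangle$ be a noncommutative polynomial with zero constant term and $\mathrm{ord}(p)=r$, where $1<r<n-1$. Let $A'=(a'_{ij})\in T_n(K)^{(r-1)}$ be such that $a'_{s,r+s}\neq 0$ for all $s$ with $1\leq s$ and $r+s\leq n$. Then $A'\in p(T_n(K))$.
   Context: $T_n(K)$ denotes the algebra of $n\times n$ upper triangular matrices over $K$; $T_n(K)^{(t)}$ denotes the set of upper triangular matrices whose $(i,j)$ entries vanish whenever $j-i\leq t$. $p(T_n(K))=\{p(a_1,\ldots,a_m):a_i\in T_n(K)\}$. The order $\mathrm{ord}(p)$ is the least positive integer $r$ with $p(T_r(K))=\{0\}$ but $p(T_{r+1}(K))\neq\{0\}$ (with $T_1(K)=K$). *)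

theory Defs
  imports Main "HOL-Library.Poly_Mapping"
begin

text \<open>n x n matrices over K are represented as functions nat => nat => K; indices are
  0-based (entry (i,j) of the paper is entry (i-1,j-1) here) and entries outside
  {0..<n} x {0..<n} are required to be 0.\<close>

type_synonym 'a sqmat = "nat \<Rightarrow> nat \<Rightarrow> 'a"

definition upper_tri :: "nat \<Rightarrow> 'a::zero sqmat set" where
  "upper_tri n = {A. \<forall>i j. (n \<le> i \<or> n \<le> j \<or> j < i) \<longrightarrow> A i j = 0}"

definition upper_tri_strict :: "nat \<Rightarrow> nat \<Rightarrow> 'a::zero sqmat set" where
  "upper_tri_strict n t = {A \<in> upper_tri n. \<forall>i j. int j - int i \<le> int t \<longrightarrow> A i j = 0}"

definition mat_mul :: "nat \<Rightarrow> 'a::semiring_0 sqmat \<Rightarrow> 'a sqmat \<Rightarrow> 'a sqmat" where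
  "mat_mul n A B = (\<lambda>i j. if i < n \<and> j < n then (\<Sum>k<n. A i k * B k j) else 0)"

definition mat_one :: "nat \<Rightarrow> 'a::{zero,one} sqmat" where
  "mat_one n = (\<lambda>i j. if i < n \<and> i = j then 1 else 0)"

definition mat_smult :: "'a::times \<Rightarrow> 'a sqmat \<Rightarrow> 'a sqmat" where
  "mat_smult c A = (\<lambda>i j. c * A i j)"

text \<open>Noncommutative polynomials K<x_0, x_1, ...>: finitely supported coefficient functions
  on words (lists of variable indices). The paper's variable x_k is our index k-1.\<close>
type_synonym 'a ncpoly = "nat list \<Rightarrow>\<^sub>0 'a"

definition ncpoly_vars_in :: "nat \<Rightarrow> 'a::zero ncpoly \<Rightarrow> bool" where
  "ncpoly_vars_in m p \<longleftrightarrow> (\<forall>w \<in> Poly_Mapping.keys p. \<forall>x \<in> set w. x < m)"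

definition word_eval :: "nat \<Rightarrow> (nat \<Rightarrow> 'a::semiring_1 sqmat) \<Rightarrow> nat list \<Rightarrow> 'a sqmat" where
  "word_eval n a w = foldr (\<lambda>x M. mat_mul n (a x) M) w (mat_one n)"

definition ncpoly_eval :: "nat \<Rightarrow> 'a::comm_semiring_1 ncpoly \<Rightarrow> (nat \<Rightarrow> 'a sqmat) \<Rightarrow> 'a sqmat" where
  "ncpoly_eval n p a = (\<lambda>i j. \<Sum>w\<in>Poly_Mapping.keys p. Poly_Mapping.lookup p w * word_eval n a w i j)"

definition image_on_T :: "nat \<Rightarrow> nat \<Rightarrow> 'a::comm_semiring_1 ncpoly \<Rightarrow> 'a sqmat set" where
  "image_on_T m n p = {ncpoly_eval n p a | a. \<forall>k<m. a k \<in> upper_tri n}"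

definition vanishes_on_T :: "nat \<Rightarrow> nat \<Rightarrow> 'a::comm_semiring_1 ncpoly \<Rightarrow> bool" where
  "vanishes_on_T m n p \<longleftrightarrow> image_on_T m n p = {\<lambda>i j. 0}"

definition has_order :: "nat \<Rightarrow> 'a::comm_semiring_1 ncpoly \<Rightarrow> nat \<Rightarrow> bool" where
  "has_order m p r \<longleftrightarrow>
     (let P = (\<lambda>s. vanishes_on_T m s p \<and> \<not> vanishes_on_T m (s + 1) p)
      in r \<ge> 1 \<and> P r \<and> (\<forall>s. 1 \<le> s \<and> s < r \<longrightarrow> \<not> P s))"

end

theory Submission
  imports Defs "HOL-Computational_Algebra.Polynomial"
begin


lemma sum_restrict:
  assumes "S \<subseteq> {..<(n::nat)}" "\<And>k. k < n \<Longrightarrow> k \<notin> S \<Longrightarrow> f k = 0"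
  shows "(\<Sum>k<n. f k) = (\<Sum>k\<in>S. f k)"
  using assms by (intro sum.mono_neutral_right) auto

lemma ut_zero: "A \<in> upper_tri n \<Longrightarrow> (n \<le> i \<or> n \<le> j \<or> j < i) \<Longrightarrow> A i j = 0"
  by (auto simp: upper_tri_def)

lemma mat_mul_out: "\<not> (i < n \<and> j < n) \<Longrightarrow> mat_mul n A B i j = 0"
  by (auto simp: mat_mul_def)

lemma mat_mul_ut:
  assumes "A \<in> upper_tri n" "B \<in> upper_tri n"
  shows "mat_mul n A B \<in> upper_tri n"
proof -
  have "mat_mul n A B i j = 0" if "j < i" for i j
  proof -
    have "A i k * B k j = 0" for k
      using that ut_zero[OF assms(1), of i k] ut_zero[OF assms(2), of k j]
      by (cases "k < i") auto
    thus ?thesis by (simp add: mat_mul_def)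
  qed
  thus ?thesis by (auto simp: upper_tri_def mat_mul_def)
qed

lemma mat_one_ut: "mat_one n \<in> upper_tri n"
  by (auto simp: upper_tri_def mat_one_def)

lemma word_eval_Nil: "word_eval n a [] = mat_one n"
  by (simp add: word_eval_def)

lemma word_eval_Cons: "word_eval n a (x # w) = mat_mul n (a x) (word_eval n a w)"
  by (simp add: word_eval_def)

lemma word_eval_ut:
  "(\<forall>x\<in>set w. a x \<in> upper_tri n) \<Longrightarrow> word_eval n a w \<in> upper_tri n"
  by (induction w) (auto simp: word_eval_Nil word_eval_Cons mat_one_ut mat_mul_ut)

lemma word_eval_out: "\<not> (i < n \<and> j < n) \<Longrightarrow> word_eval n a w i j = 0"
  by (cases w) (auto simp: word_eval_Nil word_eval_Cons mat_mul_out mat_one_def)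

lemma sum_window:
  fixes f :: "nat \<Rightarrow> 'b::comm_monoid_add"
  assumes "i + t < n" "\<And>k. k < n \<Longrightarrow> k < i + s \<or> i + t < k \<Longrightarrow> f k = 0"
  shows "(\<Sum>k<n. f k) = (\<Sum>q\<in>{s..t}. f (i + q))"
proof -
  have "(\<Sum>k<n. f k) = (\<Sum>k\<in>{i+s..i+t}. f k)"
    by (rule sum_restrict) (use assms in auto)
  also have "\<dots> = (\<Sum>q\<in>{s..t}. f (i + q))"
  proof -
    have "{i+s..i+t} = (\<lambda>q. i + q) ` {s..t}" by simp
    thus ?thesis using sum.reindex[of "\<lambda>q. i+q" "{s..t}" f] by (simp add: add.commute)
  qed
  finally show ?thesis .
qed

lemma word_eval_local:
  assumes "\<forall>x\<in>set w. a x \<in> upper_tri n" "\<forall>x\<in>set w. b x \<in> upper_tri N"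
    "i + d < n" "i' + d < N"
    "\<forall>x\<in>set w. \<forall>s t. s \<le> t \<longrightarrow> t \<le> d \<longrightarrow> a x (i+s) (i+t) = b x (i'+s) (i'+t)"
  shows "s \<le> t \<Longrightarrow> t \<le> d \<Longrightarrow> word_eval n a w (i+s) (i+t) = word_eval N b w (i'+s) (i'+t)"
  using assms
proof (induction w arbitrary: s t)
  case Nil
  then show ?case by (simp add: word_eval_Nil mat_one_def)
next
  case (Cons x w)
  let ?W = "word_eval n a w" and ?V = "word_eval N b w"
  have Wut: "?W \<in> upper_tri n" "?V \<in> upper_tri N"
    using Cons.prems by (auto intro: word_eval_ut)
  have axu: "a x \<in> upper_tri n" "b x \<in> upper_tri N" using Cons.prems by auto
  have "word_eval n a (x # w) (i+s) (i+t) = (\<Sum>k<n. a x (i+s) k * ?W k (i+t))"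
    using Cons.prems by (simp add: word_eval_Cons mat_mul_def)
  also have "\<dots> = (\<Sum>q\<in>{s..t}. a x (i+s) (i+q) * ?W (i+q) (i+t))"
    by (rule sum_window) (use Cons.prems ut_zero[OF axu(1)] ut_zero[OF Wut(1)] in auto)
  also have "\<dots> = (\<Sum>q\<in>{s..t}. b x (i'+s) (i'+q) * ?V (i'+q) (i'+t))"
    by (rule sum.cong) (use Cons in auto)
  also have "\<dots> = (\<Sum>k<N. b x (i'+s) k * ?V k (i'+t))"
    by (rule sum_window[symmetric]) (use Cons.prems ut_zero[OF axu(2)] ut_zero[OF Wut(2)] in auto)
  also have "\<dots> = word_eval N b (x # w) (i'+s) (i'+t)"
    using Cons.prems by (simp add: word_eval_Cons mat_mul_def)
  finally show ?case .
qed

lemma ncpoly_local: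
  assumes "ncpoly_vars_in m p" "\<forall>k<m. a k \<in> upper_tri n" "\<forall>k<m. b k \<in> upper_tri N"
    "i + d < n" "i' + d < N"
    "\<forall>k<m. \<forall>s t. s \<le> t \<longrightarrow> t \<le> d \<longrightarrow> a k (i+s) (i+t) = b k (i'+s) (i'+t)"
  shows "ncpoly_eval n p a i (i+d) = ncpoly_eval N p b i' (i'+d)"
  unfolding ncpoly_eval_def
proof (rule sum.cong[OF refl])
  fix w assume w: "w \<in> Poly_Mapping.keys p"
  hence wm: "\<forall>x\<in>set w. x < m" using assms(1) by (auto simp: ncpoly_vars_in_def)
  have "word_eval n a w (i+0) (i+d) = word_eval N b w (i'+0) (i'+d)"
    using word_eval_local[of w a n b N i d i' 0 d] assms wm by auto
  thus "Poly_Mapping.lookup p w * word_eval n a w i (i + d) = Poly_Mapping.lookup p w * word_eval N b w i' (i' + d)"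
    by simp
qed

lemma ncpoly_ut:
  assumes "ncpoly_vars_in m p" "\<forall>k<m. a k \<in> upper_tri n"
  shows "ncpoly_eval n p a \<in> upper_tri n"
proof -
  have "word_eval n a w \<in> upper_tri n" if "w \<in> Poly_Mapping.keys p" for w
    using that assms by (intro word_eval_ut) (auto simp: ncpoly_vars_in_def)
  thus ?thesis by (auto simp: upper_tri_def ncpoly_eval_def intro!: sum.neutral)
qed



lemma below_zero:
  fixes p :: "'a::comm_semiring_1 ncpoly"
  assumes van: "\<And>b. \<forall>k<m. b k \<in> upper_tri r \<Longrightarrow> ncpoly_eval r p b = (\<lambda>i j. 0)"
    and vars: "ncpoly_vars_in m p" and a: "\<forall>k<m. a k \<in> upper_tri n" and ji: "j < i + r"
  shows "ncpoly_eval n p a i j = 0"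
proof (cases "i < n \<and> j < n \<and> i \<le> j")
  case False
  hence "n \<le> i \<or> n \<le> j \<or> j < i" by auto
  from ut_zero[OF ncpoly_ut[OF vars a] this] show ?thesis .
next
  case True
  define d where "d = j - i"
  have dr: "d < r" "j = i + d" using True ji by (auto simp: d_def)
  define b where "b = (\<lambda>k u v. if u \<le> v \<and> v \<le> d then a k (i+u) (i+v) else (0::'a))"
  have bu: "\<forall>k<m. b k \<in> upper_tri r"
    using dr by (auto simp: upper_tri_def b_def)
  have "ncpoly_eval n p a i (i+d) = ncpoly_eval r p b 0 (0+d)"
    by (rule ncpoly_local[OF vars a bu]) (use True dr in \<open>auto simp: b_def\<close>)
  thus ?thesis using van[OF bu] dr by (metis add_0)
qed

lemma order_facts:
  fixes p :: "'a::comm_semiring_1 ncpoly"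
  assumes "has_order m p r"
  shows "r \<ge> 1" "\<And>b. \<forall>k<m. b k \<in> upper_tri r \<Longrightarrow> ncpoly_eval r p b = (\<lambda>i j. 0)"
    "\<exists>b. (\<forall>k<m. b k \<in> upper_tri (r+1)) \<and> ncpoly_eval (r+1) p b \<noteq> (\<lambda>i j. 0)"
proof -
  have h: "r \<ge> 1 \<and> vanishes_on_T m r p \<and> \<not> vanishes_on_T m (r+1) p"
    using assms unfolding has_order_def Let_def by (elim conjE) (intro conjI; assumption)
  show "r \<ge> 1" using h by simp
  have mem: "ncpoly_eval s p b \<in> image_on_T m s p" if "\<forall>k<m. b k \<in> upper_tri s" for b s
  proof -
    have "\<exists>a. ncpoly_eval s p b = ncpoly_eval s p a \<and> (\<forall>k<m. a k \<in> upper_tri s)"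
      using that by blast
    thus ?thesis unfolding image_on_T_def by simp
  qed
  show "ncpoly_eval r p b = (\<lambda>i j. 0)" if "\<forall>k<m. b k \<in> upper_tri r" for b
    using mem[OF that] h unfolding vanishes_on_T_def by simp
  have z: "\<forall>k<m. (\<lambda>k i j. 0::'a) k \<in> upper_tri (r+1)" by (simp add: upper_tri_def)
  show "\<exists>b. (\<forall>k<m. b k \<in> upper_tri (r+1)) \<and> ncpoly_eval (r+1) p b \<noteq> (\<lambda>i j. 0)"
  proof (rule ccontr)
    assume na: "\<not> ?thesis"
    have na': "ncpoly_eval (r+1) p b = (\<lambda>i j. 0)" if "\<forall>k<m. b k \<in> upper_tri (r+1)" for b
      using na that by blast
    have "image_on_T m (r+1) p = {\<lambda>i j. 0}"
    proof (rule equalityI)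
      show "image_on_T m (r+1) p \<subseteq> {\<lambda>i j. 0}"
      proof
        fix x assume "x \<in> image_on_T m (r+1) p"
        then obtain a where "x = ncpoly_eval (r+1) p a" "\<forall>k<m. a k \<in> upper_tri (r+1)"
          unfolding image_on_T_def by blast
        thus "x \<in> {\<lambda>i j. 0}" using na' by simp
      qed
      show "{\<lambda>i j. 0} \<subseteq> image_on_T m (r+1) p"
        using mem[OF z] na'[OF z] by simp
    qed
    thus False using h by (simp add: vanishes_on_T_def)
  qed
qed

lemma top_entry:
  fixes p :: "'a::comm_semiring_1 ncpoly"
  assumes van: "\<And>b. \<forall>k<m. b k \<in> upper_tri r \<Longrightarrow> ncpoly_eval r p b = (\<lambda>i j. 0)"
    and vars: "ncpoly_vars_in m p" and b: "\<forall>k<m. b k \<in> upper_tri (r+1)"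
    and nz: "ncpoly_eval (r+1) p b \<noteq> (\<lambda>i j. 0)"
  shows "ncpoly_eval (r+1) p b 0 r \<noteq> 0"
proof -
  obtain i j where ij: "ncpoly_eval (r+1) p b i j \<noteq> 0" using nz by blast
  have "\<not> (r + 1 \<le> i \<or> r + 1 \<le> j \<or> j < i)"
  proof
    assume "r + 1 \<le> i \<or> r + 1 \<le> j \<or> j < i"
    from ut_zero[OF ncpoly_ut[OF vars b] this] ij show False by simp
  qed
  moreover have "\<not> j < i + r"
  proof
    assume "j < i + r"
    from below_zero[OF van vars b this] ij show False by simp
  qed
  ultimately have "i = 0" "j = r" by auto
  thus ?thesis using ij by simp
qed

definition polyfun :: "('a::field \<Rightarrow> 'a) \<Rightarrow> bool" where
  "polyfun h \<longleftrightarrow> (\<exists>q. \<forall>t. h t = poly q t)"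

lemma polyfun_const: "polyfun (\<lambda>t. c)"
  unfolding polyfun_def by (rule exI[of _ "[:c:]"]) simp

lemma polyfun_add: "polyfun f \<Longrightarrow> polyfun g \<Longrightarrow> polyfun (\<lambda>t. f t + g t)"
  unfolding polyfun_def by (metis poly_add)

lemma polyfun_mult: "polyfun f \<Longrightarrow> polyfun g \<Longrightarrow> polyfun (\<lambda>t. f t * g t)"
  unfolding polyfun_def by (metis poly_mult)

lemma polyfun_sum: "(\<And>x. x \<in> S \<Longrightarrow> polyfun (f x)) \<Longrightarrow> polyfun (\<lambda>t. \<Sum>x\<in>S. f x t)"
proof (induction S rule: infinite_finite_induct)
  case (infinite A) thus ?case by (simp add: polyfun_const)
next
  case empty thus ?case by (simp add: polyfun_const)
next
  case (insert x F) thus ?case by (simp add: polyfun_add)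
qed

lemma polyfun_line: "polyfun (\<lambda>t. x + t * (y - x))"
  unfolding polyfun_def by (rule exI[of _ "[:x, y - x:]"]) (simp add: algebra_simps)

lemma word_eval_polyfun:
  fixes A :: "'a::field \<Rightarrow> nat \<Rightarrow> 'a sqmat"
  assumes "\<And>k u v. polyfun (\<lambda>t. A t k u v)"
  shows "polyfun (\<lambda>t. word_eval n (A t) w i j)"
proof (induction w arbitrary: i j)
  case Nil thus ?case by (simp add: word_eval_Nil polyfun_const)
next
  case (Cons x w)
  show ?case
  proof (cases "i < n \<and> j < n")
    case True
    thus ?thesis unfolding word_eval_Cons mat_mul_def
      by (simp add: polyfun_sum polyfun_mult assms Cons.IH)
  next
    case False
    show ?thesis unfolding word_eval_Cons mat_mul_def if_not_P[OF False] by (rule polyfun_const)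
  qed
qed

lemma ncpoly_polyfun:
  fixes A :: "'a::field \<Rightarrow> nat \<Rightarrow> 'a sqmat"
  assumes "\<And>k u v. polyfun (\<lambda>t. A t k u v)"
  shows "polyfun (\<lambda>t. ncpoly_eval n p (A t) i j)"
  unfolding ncpoly_eval_def
  by (intro polyfun_sum polyfun_mult polyfun_const word_eval_polyfun assms)

lemma polyfun_roots: "polyfun h \<Longrightarrow> h t0 \<noteq> 0 \<Longrightarrow> finite {t. h t = 0}"
proof -
  assume "polyfun h" "h t0 \<noteq> 0"
  then obtain q where q: "\<And>t. h t = poly q t" unfolding polyfun_def by blast
  hence "q \<noteq> 0" using \<open>h t0 \<noteq> 0\<close> by auto
  thus ?thesis using poly_roots_finite[of q] q by simp
qed

lemma generic:
  fixes p :: "'a::field ncpoly"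
  assumes inf: "infinite (UNIV :: 'a set)"
    and wit: "\<And>i. i + r < n \<Longrightarrow> \<exists>c. (\<forall>k<m. c k \<in> upper_tri n) \<and> ncpoly_eval n p c i (i+r) \<noteq> 0"
  shows "\<exists>a. (\<forall>k<m. a k \<in> upper_tri n) \<and> (\<forall>i. i + r < n \<longrightarrow> ncpoly_eval n p a i (i+r) \<noteq> 0)"
proof -
  have "\<exists>a. (\<forall>k<m. a k \<in> upper_tri n) \<and> (\<forall>i<N. i + r < n \<longrightarrow> ncpoly_eval n p a i (i+r) \<noteq> 0)" for N
  proof (induction N)
    case 0
    show ?case by (rule exI[of _ "\<lambda>k i j. 0"]) (simp add: upper_tri_def)
  next
    case (Suc N)
    then obtain a where a: "\<forall>k<m. a k \<in> upper_tri n"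
      "\<forall>i<N. i + r < n \<longrightarrow> ncpoly_eval n p a i (i+r) \<noteq> 0" by blast
    show ?case
    proof (cases "N + r < n")
      case False
      have "\<forall>i<Suc N. i + r < n \<longrightarrow> ncpoly_eval n p a i (i+r) \<noteq> 0"
      proof (intro allI impI)
        fix i assume "i < Suc N" "i + r < n"
        hence "i < N" using False by (cases "i = N") auto
        thus "ncpoly_eval n p a i (i+r) \<noteq> 0" using a(2) \<open>i + r < n\<close> by blast
      qed
      thus ?thesis using a(1) by blast
    next
      case True
      obtain c where c: "\<forall>k<m. c k \<in> upper_tri n" "ncpoly_eval n p c N (N+r) \<noteq> 0"
        using wit[OF True] by blast
      define L where "L = (\<lambda>t k u v. a k u v + t * (c k u v - a k u v))"
      have L0: "L 0 = a" and L1: "L 1 = c" by (auto simp: L_def)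
      have Lu: "\<forall>k<m. L t k \<in> upper_tri n" for t
        using a(1) c(1) by (auto simp: upper_tri_def L_def)
      have pf: "polyfun (\<lambda>t. ncpoly_eval n p (L t) i j)" for i j
        by (rule ncpoly_polyfun) (simp add: L_def polyfun_line)
      define Z where "Z = (\<Union>i\<in>{i. i < Suc N \<and> i + r < n}. {t. ncpoly_eval n p (L t) i (i+r) = 0})"
      have "finite Z" unfolding Z_def
      proof (rule finite_UN_I)
        show "finite {i. i < Suc N \<and> i + r < n}" by simp
      next
        fix i assume i: "i \<in> {i. i < Suc N \<and> i + r < n}"
        show "finite {t. ncpoly_eval n p (L t) i (i+r) = 0}"
        proof (cases "i < N")
          case True
          hence "ncpoly_eval n p (L 0) i (i+r) \<noteq> 0" using i a(2) by (simp add: L0)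
          from polyfun_roots[OF pf[of i "i+r"] this] show ?thesis .
        next
          case False
          hence "i = N" using i by auto
          hence "ncpoly_eval n p (L 1) i (i+r) \<noteq> 0" using c(2) by (simp add: L1)
          from polyfun_roots[OF pf[of i "i+r"] this] show ?thesis .
        qed
      qed
      then obtain t where "t \<notin> Z" using inf ex_new_if_finite by blast
      thus ?thesis using Lu[of t] unfolding Z_def by blast
    qed
  qed
  from this[of n] obtain a where "\<forall>k<m. a k \<in> upper_tri n"
    "\<forall>i<n. i + r < n \<longrightarrow> ncpoly_eval n p a i (i+r) \<noteq> 0" by blast
  thus ?thesis by auto
qed



lemma mat_mul_assoc: "mat_mul n A (mat_mul n B C) = mat_mul n (mat_mul n A B) C"
proof (intro ext)
  fix i j
  show "mat_mul n A (mat_mul n B C) i j = mat_mul n (mat_mul n A B) C i j"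
  proof (cases "i < n \<and> j < n")
    case True
    have "(\<Sum>k<n. A i k * mat_mul n B C k j) = (\<Sum>k<n. A i k * (\<Sum>l<n. B k l * C l j))"
      by (rule sum.cong) (use True in \<open>auto simp: mat_mul_def\<close>)
    also have "\<dots> = (\<Sum>k<n. \<Sum>l<n. A i k * B k l * C l j)"
      by (simp add: sum_distrib_left mult.assoc)
    also have "\<dots> = (\<Sum>l<n. \<Sum>k<n. A i k * B k l * C l j)"
      by (rule sum.swap)
    also have "\<dots> = (\<Sum>l<n. (\<Sum>k<n. A i k * B k l) * C l j)"
      by (simp add: sum_distrib_right)
    also have "\<dots> = (\<Sum>l<n. mat_mul n A B i l * C l j)"
      by (rule sum.cong) (use True in \<open>auto simp: mat_mul_def\<close>)
    finally show ?thesis using True by (simp add: mat_mul_def)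
  next
    case False thus ?thesis by (simp add: mat_mul_out)
  qed
qed

lemma mat_mul_one_right:
  fixes g :: "'a::semiring_1 sqmat"
  shows "mat_mul n g (mat_one n) = (\<lambda>i j. if i < n \<and> j < n then g i j else 0)"
proof (intro ext)
  fix i j
  show "mat_mul n g (mat_one n) i j = (if i < n \<and> j < n then g i j else 0)"
  proof (cases "i < n \<and> j < n")
    case True
    have "(\<Sum>k<n. g i k * mat_one n k j) = (\<Sum>k<n. if k = j then g i k else 0)"
      by (rule sum.cong) (auto simp: mat_one_def)
    thus ?thesis using True by (simp add: mat_mul_def)
  qed (auto simp: mat_mul_def)
qed

lemma mat_mul_one_left:
  fixes g :: "'a::semiring_1 sqmat"
  shows "mat_mul n (mat_one n) g = (\<lambda>i j. if i < n \<and> j < n then g i j else 0)"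
proof (intro ext)
  fix i j
  show "mat_mul n (mat_one n) g i j = (if i < n \<and> j < n then g i j else 0)"
  proof (cases "i < n \<and> j < n")
    case True
    have "(\<Sum>k<n. mat_one n i k * g k j) = (\<Sum>k<n. if k = i then g k j else 0)"
      by (rule sum.cong) (auto simp: mat_one_def)
    thus ?thesis using True by (simp add: mat_mul_def)
  qed (auto simp: mat_mul_def)
qed

lemma conj_word:
  assumes "\<forall>x\<in>set w. mat_mul n g (a x) = mat_mul n (a' x) g"
  shows "mat_mul n g (word_eval n a w) = mat_mul n (word_eval n a' w) g"
  using assms
proof (induction w)
  case Nil thus ?case by (simp add: word_eval_Nil mat_mul_one_right mat_mul_one_left)
next
  case (Cons x w)
  have "mat_mul n g (word_eval n a (x # w)) = mat_mul n (mat_mul n g (a x)) (word_eval n a w)"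
    by (simp add: word_eval_Cons mat_mul_assoc)
  also have "\<dots> = mat_mul n (a' x) (mat_mul n g (word_eval n a w))"
    using Cons.prems by (simp add: mat_mul_assoc)
  also have "\<dots> = mat_mul n (a' x) (mat_mul n (word_eval n a' w) g)"
    using Cons by simp
  also have "\<dots> = mat_mul n (word_eval n a' (x # w)) g"
    by (simp add: word_eval_Cons mat_mul_assoc)
  finally show ?case .
qed

lemma mat_mul_ncpoly_left:
  fixes p :: "'a::comm_semiring_1 ncpoly"
  shows "mat_mul n g (ncpoly_eval n p a) =
    (\<lambda>i j. \<Sum>w\<in>Poly_Mapping.keys p. Poly_Mapping.lookup p w * mat_mul n g (word_eval n a w) i j)"
proof (intro ext)
  fix i j
  show "mat_mul n g (ncpoly_eval n p a) i j =
    (\<Sum>w\<in>Poly_Mapping.keys p. Poly_Mapping.lookup p w * mat_mul n g (word_eval n a w) i j)"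
  proof (cases "i < n \<and> j < n")
    case True
    have "mat_mul n g (ncpoly_eval n p a) i j =
      (\<Sum>k<n. \<Sum>w\<in>Poly_Mapping.keys p. g i k * (Poly_Mapping.lookup p w * word_eval n a w k j))"
      using True by (simp add: mat_mul_def ncpoly_eval_def sum_distrib_left)
    also have "\<dots> = (\<Sum>w\<in>Poly_Mapping.keys p. \<Sum>k<n. g i k * (Poly_Mapping.lookup p w * word_eval n a w k j))"
      by (rule sum.swap)
    also have "\<dots> = (\<Sum>w\<in>Poly_Mapping.keys p. Poly_Mapping.lookup p w * mat_mul n g (word_eval n a w) i j)"
      using True by (simp add: mat_mul_def sum_distrib_left mult.left_commute)
    finally show ?thesis .
  qed (auto simp: mat_mul_def)
qed

lemma mat_mul_ncpoly_right:
  fixes p :: "'a::comm_semiring_1 ncpoly"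
  shows "mat_mul n (ncpoly_eval n p a) g =
    (\<lambda>i j. \<Sum>w\<in>Poly_Mapping.keys p. Poly_Mapping.lookup p w * mat_mul n (word_eval n a w) g i j)"
proof (intro ext)
  fix i j
  show "mat_mul n (ncpoly_eval n p a) g i j =
    (\<Sum>w\<in>Poly_Mapping.keys p. Poly_Mapping.lookup p w * mat_mul n (word_eval n a w) g i j)"
  proof (cases "i < n \<and> j < n")
    case True
    have "mat_mul n (ncpoly_eval n p a) g i j =
      (\<Sum>k<n. \<Sum>w\<in>Poly_Mapping.keys p. Poly_Mapping.lookup p w * word_eval n a w i k * g k j)"
      using True by (simp add: mat_mul_def ncpoly_eval_def sum_distrib_right)
    also have "\<dots> = (\<Sum>w\<in>Poly_Mapping.keys p. \<Sum>k<n. Poly_Mapping.lookup p w * word_eval n a w i k * g k j)"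
      by (rule sum.swap)
    also have "\<dots> = (\<Sum>w\<in>Poly_Mapping.keys p. Poly_Mapping.lookup p w * mat_mul n (word_eval n a w) g i j)"
      using True by (simp add: mat_mul_def sum_distrib_left mult.assoc)
    finally show ?thesis .
  qed (auto simp: mat_mul_def)
qed

lemma conj_ncpoly:
  fixes p :: "'a::comm_semiring_1 ncpoly"
  assumes "ncpoly_vars_in m p" "\<forall>k<m. mat_mul n g (a k) = mat_mul n (a' k) g"
  shows "mat_mul n g (ncpoly_eval n p a) = mat_mul n (ncpoly_eval n p a') g"
proof -
  have "mat_mul n g (word_eval n a w) = mat_mul n (word_eval n a' w) g"
    if "w \<in> Poly_Mapping.keys p" for w
    using that assms by (intro conj_word) (auto simp: ncpoly_vars_in_def)
  thus ?thesis by (simp add: mat_mul_ncpoly_left mat_mul_ncpoly_right)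
qed



function rdiv :: "nat \<Rightarrow> 'a::field sqmat \<Rightarrow> 'a sqmat \<Rightarrow> nat \<Rightarrow> nat \<Rightarrow> 'a" where
  "rdiv n g B i j = (if n \<le> i \<or> n \<le> j \<or> j < i then 0
     else (B i j - (\<Sum>k\<in>{i..<j}. rdiv n g B i k * g k j)) / g j j)"
  by pat_completeness auto
termination by (relation "measure (\<lambda>(n,g,B,i,j). j)") auto

declare rdiv.simps[simp del]

lemma rdiv_zero: "k < i \<Longrightarrow> rdiv n g B i k = 0"
  by (subst rdiv.simps) simp

lemma rdiv_ut: "rdiv n g B \<in> upper_tri n"
  unfolding upper_tri_def by (auto simp: rdiv.simps)

lemma rdiv_eq:
  fixes g :: "'a::field sqmat"
  assumes g: "g \<in> upper_tri n" "\<And>i. i < n \<Longrightarrow> g i i \<noteq> 0" and B: "B \<in> upper_tri n"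
  shows "mat_mul n (rdiv n g B) g = B"
proof (intro ext)
  fix i j
  show "mat_mul n (rdiv n g B) g i j = B i j"
  proof (cases "i < n \<and> j < n")
    case False thus ?thesis using ut_zero[OF B] by (auto simp: mat_mul_out)
  next
    case True
    show ?thesis
    proof (cases "j < i")
      case ji: True
      have z: "rdiv n g B i k * g k j = 0" for k
        using ji rdiv_zero[of k i n g B] ut_zero[OF g(1), of k j] by (cases "k < i") auto
      have "(\<Sum>k<n. rdiv n g B i k * g k j) = 0" by (rule sum.neutral) (use z in blast)
      thus ?thesis using True ut_zero[OF B, of i j] ji by (simp add: mat_mul_def)
    next
      case False
      have "(\<Sum>k<n. rdiv n g B i k * g k j) = (\<Sum>k\<in>{i..<Suc j}. rdiv n g B i k * g k j)"
        by (rule sum_restrict) (use True rdiv_zero[of _ i n g B] ut_zero[OF g(1)] in auto)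
      hence "mat_mul n (rdiv n g B) g i j = (\<Sum>k\<in>{i..<Suc j}. rdiv n g B i k * g k j)"
        using True by (simp add: mat_mul_def)
      also have "\<dots> = (\<Sum>k\<in>{i..<j}. rdiv n g B i k * g k j) + rdiv n g B i j * g j j"
        using False by simp
      also have "rdiv n g B i j * g j j = B i j - (\<Sum>k\<in>{i..<j}. rdiv n g B i k * g k j)"
        using True False g(2)[of j] by (subst rdiv.simps) (simp add: field_simps)
      finally show ?thesis by simp
    qed
  qed
qed

lemma right_cancel:
  fixes g :: "'a::field sqmat"
  assumes g: "g \<in> upper_tri n" "\<And>i. i < n \<Longrightarrow> g i i \<noteq> 0"
    and eq: "mat_mul n M g = mat_mul n M' g"
  shows "i < n \<Longrightarrow> j < n \<Longrightarrow> M i j = M' i j"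
proof (induction j rule: less_induct)
  case (less j)
  have r: "mat_mul n N g i j = (\<Sum>k<j. N i k * g k j) + N i j * g j j" for N
  proof -
    have "(\<Sum>k<n. N i k * g k j) = (\<Sum>k\<in>{..<Suc j}. N i k * g k j)"
      by (rule sum_restrict) (use less.prems ut_zero[OF g(1)] in auto)
    thus ?thesis using less.prems by (simp add: mat_mul_def)
  qed
  have "(\<Sum>k<j. M i k * g k j) = (\<Sum>k<j. M' i k * g k j)"
    by (rule sum.cong) (use less in auto)
  moreover have "mat_mul n M g i j = mat_mul n M' g i j" using eq by simp
  ultimately have "M i j * g j j = M' i j * g j j" unfolding r[of M] r[of M'] by simp
  thus ?case using g(2)[of j] less.prems by simp
qed

function G :: "nat \<Rightarrow> nat \<Rightarrow> 'a::field sqmat \<Rightarrow> 'a sqmat \<Rightarrow> nat \<Rightarrow> nat \<Rightarrow> 'a" where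
  "G n r X A i l = (if n \<le> i \<or> n \<le> l \<or> l < i \<or> r = 0 then 0
     else if n \<le> l + r then (if l = i then 1 else 0)
     else ((\<Sum>k\<in>{i+r..l+r}. A i k * G n r X A k (l+r))
           - (\<Sum>k\<in>{i..<l}. G n r X A i k * X k (l+r))) / X l (l+r))"
  by pat_completeness auto
termination by (relation "measures [\<lambda>(n,r,X,A,i,l). n - i, \<lambda>(n,r,X,A,i,l). l]") auto

declare G.simps[simp del]

lemma G_zero: "k < i \<Longrightarrow> G n r X A i k = 0"
  by (subst G.simps) simp

lemma G_zero': "n \<le> k \<Longrightarrow> G n r X A i k = 0"
  by (subst G.simps) simp

lemma G_ut: "G n r X A \<in> upper_tri n"
  unfolding upper_tri_def by (auto simp: G.simps)

lemma G_diag: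
  fixes X :: "'a::field sqmat"
  assumes "r > 0" "\<And>l. l + r < n \<Longrightarrow> X l (l+r) \<noteq> 0" "\<And>l. l + r < n \<Longrightarrow> A l (l+r) \<noteq> 0"
  shows "i < n \<Longrightarrow> G n r X A i i \<noteq> 0"
proof (induction "n - i" arbitrary: i rule: less_induct)
  case less
  show ?case
  proof (cases "n \<le> i + r")
    case True thus ?thesis using less.prems assms(1) by (subst G.simps) simp
  next
    case False
    have "G n r X A (i+r) (i+r) \<noteq> 0" using less.hyps[of "i+r"] False assms(1) by simp
    moreover have "G n r X A i i = A i (i+r) * G n r X A (i+r) (i+r) / X i (i+r)"
      using False less.prems assms(1) by (subst G.simps) simp
    ultimately show ?thesis using assms(2,3)[of i] False by simp
  qed
qed

lemma G_eq:
  fixes X :: "'a::field sqmat"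
  assumes r: "r > 0" and X: "X \<in> upper_tri n" "\<And>i j. j < i + r \<Longrightarrow> X i j = 0"
    and Xd: "\<And>l. l + r < n \<Longrightarrow> X l (l+r) \<noteq> 0"
    and A: "A \<in> upper_tri n" "\<And>i j. j < i + r \<Longrightarrow> A i j = 0"
  shows "mat_mul n (G n r X A) X = mat_mul n A (G n r X A)"
proof (intro ext)
  fix i j
  let ?G = "G n r X A"
  show "mat_mul n ?G X i j = mat_mul n A ?G i j"
  proof (cases "i < n \<and> j < n")
    case False thus ?thesis by (simp add: mat_mul_out)
  next
    case True
    show ?thesis
    proof (cases "j < i + r")
      case ji: True
      have z1: "?G i k * X k j = 0" for k
        using ji G_zero[of k i n r X A] X(2)[of j k] by (cases "k < i") auto
      have z2: "A i k * ?G k j = 0" for k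
        using ji G_zero[of j k n r X A] A(2)[of k i] by (cases "k < i + r") auto
      have "(\<Sum>k<n. ?G i k * X k j) = 0" by (rule sum.neutral) (use z1 in blast)
      moreover have "(\<Sum>k<n. A i k * ?G k j) = 0" by (rule sum.neutral) (use z2 in blast)
      ultimately show ?thesis using True by (simp add: mat_mul_def)
    next
      case False
      define l where "l = j - r"
      have l: "i \<le> l" "l + r = j" "l < n" using False True by (auto simp: l_def)
      have "(\<Sum>k<n. ?G i k * X k j) = (\<Sum>k\<in>{i..<Suc l}. ?G i k * X k j)"
        by (rule sum_restrict) (use True l G_zero[of _ i n r X A] X(2) in \<open>auto simp: not_less_eq\<close>)
      hence "mat_mul n ?G X i j = (\<Sum>k\<in>{i..<Suc l}. ?G i k * X k j)"
        using True by (simp add: mat_mul_def)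
      also have "\<dots> = (\<Sum>k\<in>{i..<l}. ?G i k * X k j) + ?G i l * X l j"
        using l by simp
      have "(\<Sum>k<n. A i k * ?G k j) = (\<Sum>k\<in>{i+r..j}. A i k * ?G k j)"
        by (rule sum_restrict) (use True l G_zero[of j _ n r X A] A(2) in \<open>auto simp: not_le\<close>)
      hence "mat_mul n A ?G i j = (\<Sum>k\<in>{i+r..j}. A i k * ?G k j)"
        using True by (simp add: mat_mul_def)
      moreover have "?G i l = ((\<Sum>k\<in>{i+r..j}. A i k * ?G k j) - (\<Sum>k\<in>{i..<l}. ?G i k * X k j)) / X l j"
        using l True r by (subst G.simps) simp
      moreover have "X l j \<noteq> 0" using Xd[of l] l True by auto
      ultimately have "?G i l * X l j = (\<Sum>k\<in>{i+r..j}. A i k * ?G k j) - (\<Sum>k\<in>{i..<l}. ?G i k * X k j)"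
        by simp
      with \<open>mat_mul n ?G X i j = _\<close> \<open>mat_mul n A ?G i j = _\<close> l(1) show ?thesis by simp
    qed
  qed
qed



theorem lemma3p2:
  fixes p :: "'a::field ncpoly" and m n r :: nat and A' :: "'a sqmat"
  assumes "infinite (UNIV :: 'a set)"
    and "m \<ge> 1" and "n \<ge> 2"
    and "ncpoly_vars_in m p"
    and "Poly_Mapping.lookup p [] = 0"
    and "has_order m p r"
    and "1 < r" and "r < n - 1"
    and "A' \<in> upper_tri_strict n (r - 1)"
    and "\<And>s. 1 \<le> s \<Longrightarrow> r + s \<le> n \<Longrightarrow> A' (s - 1) (r + s - 1) \<noteq> 0"
  shows "A' \<in> image_on_T m n p"
proof -
  note vars = assms(4)
  note van = order_facts(2)[OF assms(6)]
  obtain b where b: "\<forall>k<m. b k \<in> upper_tri (r+1)" "ncpoly_eval (r+1) p b \<noteq> (\<lambda>i j. 0)"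
    using order_facts(3)[OF assms(6)] by blast
  have top: "ncpoly_eval (r+1) p b 0 r \<noteq> 0" by (rule top_entry[OF van vars b])
  have wit: "\<exists>c. (\<forall>k<m. c k \<in> upper_tri n) \<and> ncpoly_eval n p c i (i+r) \<noteq> 0"
    if ir: "i + r < n" for i
  proof -
    define c where "c = (\<lambda>k u v. if i \<le> u \<and> u \<le> v \<and> v \<le> i + r then b k (u - i) (v - i) else 0)"
    have cu: "\<forall>k<m. c k \<in> upper_tri n" using ir by (auto simp: c_def upper_tri_def)
    have "ncpoly_eval n p c i (i+r) = ncpoly_eval (r+1) p b 0 (0+r)"
      by (rule ncpoly_local[OF vars cu b(1)]) (use ir in \<open>auto simp: c_def\<close>)
    thus ?thesis using cu top by auto
  qed
  obtain a where a: "\<forall>k<m. a k \<in> upper_tri n"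
    "\<And>i. i + r < n \<Longrightarrow> ncpoly_eval n p a i (i+r) \<noteq> 0"
    using generic[OF assms(1) wit] by blast
  define X where "X = ncpoly_eval n p a"
  have XU: "X \<in> upper_tri n" unfolding X_def by (rule ncpoly_ut[OF vars a(1)])
  have X0: "X i j = 0" if "j < i + r" for i j
    unfolding X_def by (rule below_zero[OF van vars a(1) that])
  have Xd: "X l (l+r) \<noteq> 0" if "l + r < n" for l using a(2)[OF that] by (simp add: X_def)
  have AU: "A' \<in> upper_tri n" using assms(9) by (simp add: upper_tri_strict_def)
  have A0: "A' i j = 0" if "j < i + r" for i j
    using assms(9) that assms(7) by (auto simp: upper_tri_strict_def)
  have Ad: "A' l (l+r) \<noteq> 0" if "l + r < n" for l
    using assms(10)[of "l+1"] that by (simp add: add.commute add.left_commute)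
  define g where "g = G n r X A'"
  have gU: "g \<in> upper_tri n" unfolding g_def by (rule G_ut)
  have gd: "g i i \<noteq> 0" if "i < n" for i
    unfolding g_def using G_diag[of r n X A' i] assms(7) Xd Ad that by auto
  have gX: "mat_mul n g X = mat_mul n A' g"
    unfolding g_def by (rule G_eq) (use assms(7) XU X0 Xd AU A0 in auto)
  define a' where "a' = (\<lambda>k. rdiv n g (mat_mul n g (a k)))"
  have a'U: "\<forall>k<m. a' k \<in> upper_tri n" by (simp add: a'_def rdiv_ut)
  have a'eq: "\<forall>k<m. mat_mul n g (a k) = mat_mul n (a' k) g"
  proof (intro allI impI)
    fix k assume "k < m"
    hence "mat_mul n g (a k) \<in> upper_tri n" using a(1) gU by (simp add: mat_mul_ut)
    thus "mat_mul n g (a k) = mat_mul n (a' k) g"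
      unfolding a'_def using rdiv_eq[OF gU gd] by simp
  qed
  have "mat_mul n (ncpoly_eval n p a') g = mat_mul n A' g"
    using conj_ncpoly[OF vars a'eq] gX by (simp add: X_def)
  hence inner: "ncpoly_eval n p a' i j = A' i j" if "i < n" "j < n" for i j
    using right_cancel[OF gU gd] that by blast
  have "ncpoly_eval n p a' = A'"
  proof (intro ext)
    fix i j
    show "ncpoly_eval n p a' i j = A' i j"
    proof (cases "i < n \<and> j < n")
      case True thus ?thesis using inner by simp
    next
      case False
      hence "n \<le> i \<or> n \<le> j \<or> j < i" by auto
      thus ?thesis using ut_zero[OF ncpoly_ut[OF vars a'U]] ut_zero[OF AU] by metis
    qed
  qed
  thus ?thesis unfolding image_on_T_def using a'U by blast
qed


end
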